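(* For a prime $p$ and a positive integer $h$, let $$Med^{(2)}(p,h)=\lim_{k\to\infty}\frac{\#\{a\in\mathbb{Z}/p^k\mathbb{Z}: a\in Sq(p,k)\text{ and } a+h\in Sq(p,k)\}}{p^k},$$ where $Sq(p,k)$ is the set of residues $b\in\mathbb{Z}/p^k\mathbb{Z}$ with $b\equiv x^2+y^2\pmod{p^k}$ for some integers $x,y$. Then the limit exists and (a) $Med^{(2)}(p,h)=1$ if $p\equiv1\pmod4$; (b) $Med^{(2)}(p,h)=\dfrac{1-p^{-(m_p(h)+1)}}{1+p^{-1}}$ if $p\equiv3\pmod4$; (c) $Med^{(2)}(2,h)=\tfrac14$ if $m_2(h)=0$, and $Med^{(2)}(2,h)=\dfrac{2^{m_2(h)+1}-3}{2^{m_2(h)+2}}$ if $m_2(h)\ge1$.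
   Context: $m_p(h)$ denotes the exponent of the prime $p$ in the factorization of $h$. *)

theory Defs
  imports "HOL-Analysis.Analysis" "HOL-Number_Theory.Number_Theory"
begin

definition Sq :: "nat \<Rightarrow> nat \<Rightarrow> int set" where
  "Sq p k = {b \<in> {0..<int p ^ k}. \<exists>x y :: int. [b = x^2 + y^2] (mod (int p ^ k))}"

definition med_ratio :: "nat \<Rightarrow> int \<Rightarrow> nat \<Rightarrow> real" where
  "med_ratio p h k = real (card {a \<in> {0..<int p ^ k}. a \<in> Sq p k \<and> (a + h) mod (int p ^ k) \<in> Sq p k})
                     / real p ^ k"

definition Med2 :: "nat \<Rightarrow> int \<Rightarrow> real" where
  "Med2 p h = lim (med_ratio p h)"

end

theory Submission
  imports Defs
begin


definition ss :: "int \<Rightarrow> int \<Rightarrow> bool" where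
  "ss n b \<longleftrightarrow> (\<exists>x y. [b = x^2 + y^2] (mod n))"

lemma ss_cong: "[a = b] (mod n) \<Longrightarrow> ss n a = ss n b"
  unfolding ss_def by (meson cong_sym cong_trans)

lemma ss_mod: "ss n (a mod n) = ss n a"
  by (rule ss_cong) (simp add: cong_def)

lemma ss_one: "ss 1 a" unfolding ss_def by auto

lemma ss_dvd_mod: "ss n a \<Longrightarrow> m dvd n \<Longrightarrow> ss m a"
  unfolding ss_def using cong_dvd_modulus by blast

lemma ss_scale: assumes "ss n b" shows "ss (q^2 * n) (q^2 * b)"
proof -
  from assms obtain x y where "[b = x^2+y^2] (mod n)" unfolding ss_def by blast
  then have "n dvd b - (x^2+y^2)" by (simp add: cong_iff_dvd_diff)
  then have "q^2*n dvd q^2*(b - (x^2+y^2))" by (simp add: mult_dvd_mono)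
  moreover have "q^2*(b - (x^2+y^2)) = q^2*b - ((q*x)^2+(q*y)^2)" by (simp add: algebra_simps power_mult_distrib)
  ultimately show ?thesis unfolding ss_def cong_iff_dvd_diff by metis
qed

lemma odd_prime_coprime2: fixes P :: int assumes "prime P" "odd P" shows "coprime 2 P"
proof -
  have "\<not> P dvd 2"
  proof
    assume "P dvd 2"
    then have "P \<le> 2" by (simp add: zdvd_imp_le)
    moreover have "P \<ge> 2" using assms prime_ge_2_int by blast
    ultimately show False using assms by simp
  qed
  then show ?thesis using assms prime_imp_coprime coprime_commute by blast
qed

lemma lift_step:
  fixes P u x y :: int
  assumes P: "prime P" "odd P" and k: "k \<ge> 1" and x: "\<not> P dvd x"
    and c: "[u = x^2 + y^2] (mod P^k)"
  shows "\<exists>x'. \<not> P dvd x' \<and> [u = x'^2 + y^2] (mod P^(k+1))"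
proof -
  obtain t where t: "u - (x^2+y^2) = P^k * t" using c unfolding cong_iff_dvd_diff dvd_def by blast
  have "coprime x P" using x P prime_imp_coprime coprime_commute by blast
  then have "coprime (2*x) P" using odd_prime_coprime2[OF P] by simp
  then obtain z where z: "[2*x*z = 1] (mod P)" using cong_solve_coprime_int by blast
  define w where "w = z*t"
  define x' where "x' = x + w*P^k"
  have "[2*x*z*t = 1*t] (mod P)" using z cong_scalar_right by blast
  then have d1: "P dvd (t - 2*x*w)" unfolding w_def cong_iff_dvd_diff
    by (metis dvd_minus_iff minus_diff_eq mult.assoc mult_1)
  have eq: "u - (x'^2+y^2) = P^k*(t - 2*x*w) - w^2*(P^k*P^k)"
    using t unfolding x'_def by (simp add: power2_eq_square algebra_simps)
  have "P^(k+1) dvd P^k*(t - 2*x*w)" using d1 by (simp add: mult_dvd_mono)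
  moreover have "P^(k+1) dvd w^2*(P^k*P^k)"
  proof -
    have "P dvd P^k" using k by (simp add: dvd_power)
    then have "P^k*P dvd P^k*P^k" by (simp add: mult_dvd_mono)
    then show ?thesis by (simp add: dvd_mult)
  qed
  ultimately have "P^(k+1) dvd u - (x'^2+y^2)" using eq by simp
  moreover have "\<not> P dvd x'"
  proof
    assume "P dvd x'"
    moreover have "P dvd w*P^k" using k by (simp add: dvd_power)
    ultimately have "P dvd x" unfolding x'_def by (metis add_diff_cancel_right' dvd_diff)
    then show False using x by simp
  qed
  ultimately show ?thesis unfolding cong_iff_dvd_diff by blast
qed

lemma lift_all:
  fixes P u x y :: int
  assumes P: "prime P" "odd P" and x: "\<not> P dvd x"
    and c: "[u = x^2 + y^2] (mod P)"
  shows "\<exists>x'. \<not> P dvd x' \<and> [u = x'^2 + y^2] (mod P^(Suc k))"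
proof (induction k)
  case 0
  then show ?case using x c by auto
next
  case (Suc k)
  then obtain x' where "\<not> P dvd x'" "[u = x'^2 + y^2] (mod P^(Suc k))" by blast
  from lift_step[OF P _ this] show ?case by simp
qed

lemma prime_int_of: "prime p \<Longrightarrow> prime (int p)" by simp

lemma not_cong_1_m1: assumes "prime p" "2 < p" "[1 = -1] (mod int p)" shows False
proof -
  have "int p dvd 2" using assms(3) unfolding cong_iff_dvd_diff by simp
  then have "int p \<le> 2" by (rule zdvd_imp_le) simp
  then show False using assms(2) by simp
qed

lemma legendre_qr:
  assumes "prime p" "2 < p" "QuadRes (int p) a" "\<not> [a = 0] (mod int p)"
  shows "[1 = a ^ ((p - 1) div 2)] (mod int p)"
  using euler_criterion[OF assms(1,2), of a] assms(3,4) unfolding Legendre_def by simp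

lemma minus1_qr:
  assumes "prime p" "p mod 4 = 1"
  shows "\<exists>i. [i^2 = -1] (mod int p)"
proof -
  have p2: "2 < p" using assms prime_ge_2_nat[OF assms(1)] by presburger
  have ev: "even ((p - 1) div 2)" using assms(2) by presburger
  have nz: "\<not> [-1 = 0] (mod int p)"
  proof
    assume "[-1 = 0] (mod int p)"
    then have "int p dvd 1" unfolding cong_iff_dvd_diff by simp
    then show False using p2 by simp
  qed
  have "QuadRes (int p) (-1)"
  proof (rule ccontr)
    assume "\<not> QuadRes (int p) (-1)"
    then have "[-1 = (-1::int) ^ ((p - 1) div 2)] (mod int p)"
      using euler_criterion[OF assms(1) p2, of "-1"] nz unfolding Legendre_def by simp
    then have "[-1 = 1] (mod int p)" using ev by simp
    then show False using not_cong_1_m1[OF assms(1) p2] cong_sym by blast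
  qed
  then show ?thesis unfolding QuadRes_def by blast
qed

lemma p3_dvd:
  assumes "prime p" "p mod 4 = 3" "[x^2 + y^2 = 0] (mod int p)"
  shows "int p dvd x"
proof (rule ccontr)
  assume nx: "\<not> int p dvd x"
  have p2: "2 < p" using assms(2) prime_ge_2_nat[OF assms(1)] by presburger
  have od: "odd ((p - 1) div 2)" using assms(2) by presburger
  have "coprime x (int p)" using nx prime_int_of[OF assms(1)] prime_imp_coprime coprime_commute by blast
  then obtain w where w: "[x*w = 1] (mod int p)" using cong_solve_coprime_int by blast
  have "[(x^2+y^2)*w^2 = 0*w^2] (mod int p)" using assms(3) cong_scalar_right by blast
  then have a: "[(x*w)^2 + (y*w)^2 = 0] (mod int p)" by (simp add: algebra_simps power_mult_distrib)
  have sq: "[(x*w)^2 = 1^2] (mod int p)" using w cong_pow by blast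
  have "[(x*w)^2 + (y*w)^2 = 1 + (y*w)^2] (mod int p)" using cong_add[OF sq cong_refl[of "(y*w)^2"]] by simp
  then have "[1 + (y*w)^2 = 0] (mod int p)" using a cong_sym cong_trans by blast
  then have b: "[(y*w)^2 = -1] (mod int p)" unfolding cong_iff_dvd_diff by (simp add: algebra_simps)
  have nz: "\<not> [-1 = 0] (mod int p)"
  proof
    assume "[-1 = 0] (mod int p)"
    then have "int p dvd 1" unfolding cong_iff_dvd_diff by simp
    then show False using p2 by simp
  qed
  have "QuadRes (int p) (-1)" using b unfolding QuadRes_def by blast
  then have "[1 = (-1::int) ^ ((p - 1) div 2)] (mod int p)" using legendre_qr[OF assms(1) p2 _ nz] by blast
  then have "[1 = -1] (mod int p)" using od by simp
  then show False using not_cong_1_m1[OF assms(1) p2] by blast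
qed

lemma small_dvd_zero: fixes P d :: int assumes "P dvd d" "\<bar>d\<bar> < P" shows "d = 0"
proof (rule ccontr)
  assume "d \<noteq> 0"
  then have "\<bar>P\<bar> \<le> \<bar>d\<bar>" using dvd_imp_le_int assms(1) by blast
  then show False using assms(2) by linarith
qed

lemma sq_inj: fixes P x z :: int
  assumes P: "prime P" and x: "x \<in> {0..(P-1) div 2}" and z: "z \<in> {0..(P-1) div 2}"
    and e: "x^2 mod P = z^2 mod P"
  shows "x = z"
proof -
  have "P dvd x^2 - z^2" using e by (simp add: mod_eq_dvd_iff)
  moreover have "x^2 - z^2 = (x-z)*(x+z)" by (simp add: algebra_simps power2_eq_square)
  ultimately have "P dvd (x-z) \<or> P dvd (x+z)" using P prime_dvd_mult_iff by metis
  moreover have "\<bar>x - z\<bar> < P" "\<bar>x + z\<bar> < P" using x z by auto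
  ultimately have "x - z = 0 \<or> x + z = 0" using small_dvd_zero by blast
  then show ?thesis using x z by auto
qed

lemma base_unit:
  fixes P u :: int
  assumes P: "prime P" "odd P" and u: "\<not> P dvd u"
  shows "\<exists>x y. \<not> P dvd x \<and> [u = x^2 + y^2] (mod P)"
proof -
  define H where "H = {0..(P-1) div 2}"
  define A where "A = (\<lambda>x. x^2 mod P) ` H"
  define B where "B = (\<lambda>y. (u - y^2) mod P) ` H"
  have P2: "P \<ge> 2" using P prime_ge_2_int by blast
  have cH: "card H = nat ((P-1) div 2 + 1)" unfolding H_def by simp
  have iA: "inj_on (\<lambda>x. x^2 mod P) H" unfolding inj_on_def H_def using sq_inj[OF P(1)] by blast
  have iB: "inj_on (\<lambda>y. (u - y^2) mod P) H"
  proof (rule inj_onI)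
    fix x z assume "x \<in> H" "z \<in> H" "(u - x^2) mod P = (u - z^2) mod P"
    then have "P dvd (u - x^2) - (u - z^2)" by (simp add: mod_eq_dvd_iff)
    then have "P dvd -(x^2 - z^2)" by (simp add: algebra_simps)
    then have "x^2 mod P = z^2 mod P" by (simp only: dvd_minus_iff mod_eq_dvd_iff)
    then show "x = z" using sq_inj[OF P(1)] \<open>x \<in> H\<close> \<open>z \<in> H\<close> unfolding H_def by blast
  qed
  have cA: "card A = card H" unfolding A_def using card_image iA by blast
  have cB: "card B = card H" unfolding B_def using card_image iB by blast
  have sub: "A \<union> B \<subseteq> {0..<P}" unfolding A_def B_def using P2 by auto
  have cP: "card (A \<union> B) \<le> nat P" using sub card_mono[of "{0..<P}" "A \<union> B"] by simp
  have "A \<inter> B \<noteq> {}"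
  proof
    assume "A \<inter> B = {}"
    then have "card (A \<union> B) = card A + card B" unfolding A_def B_def H_def
      by (simp add: card_Un_disjoint)
    moreover note cP
    ultimately have "2 * nat ((P-1) div 2 + 1) \<le> nat P" using cA cB cH by simp
    moreover have "2 * ((P-1) div 2) = P - 1" using P(2) by presburger
    ultimately show False using P2 by linarith
  qed
  then obtain x y where xy: "x \<in> H" "y \<in> H" "x^2 mod P = (u - y^2) mod P" unfolding A_def B_def by auto
  then have "P dvd x^2 - (u - y^2)" by (simp add: mod_eq_dvd_iff)
  then have "P dvd -(u - (x^2 + y^2))" by (simp add: algebra_simps)
  then have c: "[u = x^2 + y^2] (mod P)" unfolding cong_iff_dvd_diff by (simp only: dvd_minus_iff)
  show ?thesis
  proof (cases "P dvd x")
    case False then show ?thesis using c by blast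
  next
    case True
    have "\<not> P dvd y"
    proof
      assume "P dvd y"
      then have "P dvd x^2 + y^2" using True by (simp add: power2_eq_square)
      moreover have "P dvd u - (x^2 + y^2)" using c unfolding cong_iff_dvd_diff .
      ultimately have "P dvd (u - (x^2 + y^2)) + (x^2 + y^2)" by (rule dvd_add[rotated])
      then have "P dvd u" by simp
      then show False using u by simp
    qed
    moreover have "[u = y^2 + x^2] (mod P)" using c by (simp add: add.commute)
    ultimately show ?thesis by blast
  qed
qed

lemma ss_unit:
  fixes P u :: int
  assumes P: "prime P" "odd P" and u: "\<not> P dvd u"
  shows "ss (P^k) u"
proof (cases k)
  case 0 then show ?thesis by (simp add: ss_one)
next
  case (Suc j)
  obtain x y where "\<not> P dvd x" "[u = x^2 + y^2] (mod P)" using base_unit[OF P u] by blast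
  from lift_all[OF P this, of j] show ?thesis unfolding ss_def Suc by blast
qed

lemma ss_p1:
  assumes p: "prime p" "p mod 4 = 1"
  shows "ss (int p ^ k) b"
proof -
  define P where "P = int p"
  have P: "prime P" "odd P" unfolding P_def using p by (auto, presburger)
  obtain i where i: "[i^2 = -1] (mod P)" using minus1_qr[OF p] unfolding P_def by blast
  have ni: "\<not> P dvd i"
  proof
    assume "P dvd i"
    then have "P dvd i^2" by (simp add: power2_eq_square)
    moreover have "P dvd i^2 - (-1)" using i unfolding cong_iff_dvd_diff .
    ultimately have "P dvd i^2 - (i^2 - (-1))" by (rule dvd_diff)
    then have "P dvd 1" by simp
    then show False using P(1) not_prime_unit by blast
  qed
  have "[-1 = i^2 + 0^2] (mod P)" using i cong_sym by simp
  from lift_all[OF P ni this, of k] obtain i' where i': "[-1 = i'^2 + 0^2] (mod P^Suc k)" by blast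
  define n where "n = P^k"
  have "[-1 = i'^2 + 0^2] (mod n)" using cong_dvd_modulus[OF i', of n] unfolding n_def
    by (simp add: le_imp_power_dvd)
  then have "n dvd -1 - (i'^2 + 0^2)" unfolding cong_iff_dvd_diff .
  moreover have "-1 - (i'^2 + 0^2) = - (i'^2 + 1)" by simp
  ultimately have ni': "n dvd i'^2 + 1" by (metis dvd_minus_iff)
  have "coprime 2 n" unfolding n_def using odd_prime_coprime2[OF P] by simp
  then obtain w where w: "[2*w = 1] (mod n)" using cong_solve_coprime_int by blast
  then have nw: "n dvd 2*w - 1" unfolding cong_iff_dvd_diff .
  define x where "x = (b+1)*w"
  define y where "y = i'*(b-1)*w"
  have eq: "x^2 + y^2 - b = (w^2*(b-1)^2)*(i'^2+1) + (b*(2*w+1))*(2*w - 1)"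
    unfolding x_def y_def by (simp add: power2_eq_square algebra_simps)
  have "n dvd x^2 + y^2 - b" unfolding eq using ni' nw by (simp add: dvd_mult)
  moreover have "b - (x^2 + y^2) = - (x^2 + y^2 - b)" by simp
  ultimately have "[b = x^2 + y^2] (mod n)" unfolding cong_iff_dvd_diff by (metis dvd_minus_iff)
  then show ?thesis unfolding ss_def n_def P_def by blast
qed

lemma ss_p3:
  assumes p: "prime p" "p mod 4 = 3"
  shows "ss (int p ^ (j+2)) a \<longleftrightarrow> \<not> int p dvd a \<or> (int p ^ 2 dvd a \<and> ss (int p ^ j) (a div int p ^ 2))"
proof -
  define P where "P = int p"
  have P: "prime P" "odd P" unfolding P_def using p by (auto, presburger)
  have P0: "P \<noteq> 0" using P by auto
  have pe: "P^(j+2) = P^2 * P^j" by (simp add: power_add mult.commute power2_eq_square)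
  show ?thesis unfolding P_def[symmetric]
  proof
    assume s: "ss (P^(j+2)) a"
    show "\<not> P dvd a \<or> (P^2 dvd a \<and> ss (P^j) (a div P^2))"
    proof (cases "P dvd a")
      case False then show ?thesis by blast
    next
      case True
      obtain x y where c: "[a = x^2 + y^2] (mod P^(j+2))" using s unfolding ss_def by blast
      have "[a = x^2 + y^2] (mod P)" using cong_dvd_modulus[OF c] by (simp add: dvd_power)
      moreover have "[a = 0] (mod P)" using True by (simp add: cong_0_iff)
      ultimately have c0: "[x^2 + y^2 = 0] (mod P)" by (meson cong_sym cong_trans)
      then have "P dvd x" using p3_dvd[OF p] unfolding P_def by blast
      moreover have "P dvd y" using p3_dvd[OF p, of y x] c0 unfolding P_def by (simp add: add.commute)
      ultimately obtain x1 y1 where xy: "x = P*x1" "y = P*y1" by (auto elim!: dvdE)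
      have "P^(j+2) dvd a - (x^2+y^2)" using c unfolding cong_iff_dvd_diff .
      then have d: "P^2 * P^j dvd a - P^2 * (x1^2+y1^2)" unfolding pe xy by (simp add: power_mult_distrib algebra_simps)
      then have "P^2 dvd a - P^2 * (x1^2+y1^2)" using dvd_mult_left by blast
      then have "P^2 dvd (a - P^2 * (x1^2+y1^2)) + P^2 * (x1^2+y1^2)" by (rule dvd_add) simp
      then have "P^2 dvd a" by simp
      then obtain a1 where a1: "a = P^2 * a1" by (auto elim: dvdE)
      have "P^2 * P^j dvd P^2 * (a1 - (x1^2+y1^2))" using d unfolding a1 by (simp add: algebra_simps)
      then have "P^j dvd a1 - (x1^2+y1^2)" using P0 by simp
      then have "ss (P^j) a1" unfolding ss_def cong_iff_dvd_diff by blast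
      moreover have "a div P^2 = a1" using a1 P0 by simp
      ultimately show ?thesis using a1 by simp
    qed
  next
    assume "\<not> P dvd a \<or> (P^2 dvd a \<and> ss (P^j) (a div P^2))"
    then show "ss (P^(j+2)) a"
    proof
      assume "\<not> P dvd a" then show ?thesis using ss_unit[OF P] by blast
    next
      assume a: "P^2 dvd a \<and> ss (P^j) (a div P^2)"
      then have "ss (P^2 * P^j) (P^2 * (a div P^2))" using ss_scale by blast
      then have "ss (P^(j+2)) (P^2 * (a div P^2))" unfolding pe .
      moreover have "P^2 * (a div P^2) = a" using a by simp
      ultimately show ?thesis by (simp only:)
    qed
  qed
qed

lemma sq_mod4: fixes x :: int shows "x^2 mod 4 = (if even x then 0 else 1)"
proof (cases "even x")
  case True
  then obtain t where "x = 2*t" by blast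
  then show ?thesis by (simp add: power2_eq_square)
next
  case False
  then obtain t where t: "x = 2*t+1" using oddE by blast
  define s where "s = t*t+t"
  have "x^2 = 1 + s*4" unfolding t s_def by (simp add: power2_eq_square algebra_simps)
  then show ?thesis using False by simp
qed

lemma two_lift:
  fixes u :: int assumes u: "u mod 4 = 1"
  shows "\<exists>x y. odd x \<and> [u = x^2 + y^2] (mod 2^(j+3))"
proof (induction j)
  case 0
  have "u mod 8 = 1 \<or> u mod 8 = 5" using u by presburger
  then show ?case
  proof
    assume "u mod 8 = 1"
    then have "[u = 1^2 + 0^2] (mod 2^(0+3))" by (simp add: cong_def)
    then show ?thesis by (intro exI[of _ 1] exI[of _ 0]) simp
  next
    assume "u mod 8 = 5"
    then have "[u = 1^2 + 2^2] (mod 2^(0+3))" by (simp add: cong_def)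
    then show ?thesis by (intro exI[of _ 1] exI[of _ 2]) simp
  qed
next
  case (Suc j)
  then obtain x y where x: "odd x" and c: "[u = x^2 + y^2] (mod 2^(j+3))" by blast
  obtain t where t: "u - (x^2+y^2) = 2^(j+3) * t" using c unfolding cong_iff_dvd_diff dvd_def by blast
  show ?case
  proof (cases "even t")
    case True
    then obtain t' where "t = 2*t'" by blast
    then have "u - (x^2+y^2) = (2^(j+3)*2) * t'" using t by simp
    moreover have pw: "(2::int)^(Suc j+3) = 2^(j+3)*2" by (metis add_Suc power_Suc2)
    ultimately have "u - (x^2+y^2) = 2^(Suc j+3) * t'" by (simp only: pw)
    then show ?thesis using x unfolding cong_iff_dvd_diff by (metis dvd_triv_left)
  next
    case False
    define q where "q = (4::int)*2^j"
    have q3: "(2::int)^(j+3) = 2*q" unfolding q_def by (simp add: power_add)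
    have q4: "(2::int)^(Suc j+3) = 4*q" unfolding q_def by (simp add: power_add)
    define x' where "x' = x + q"
    have t': "u - (x^2+y^2) = 2*q*t" using t q3 by simp
    have eq: "u - (x'^2+y^2) = 2*q*(t - x) - q*q"
      using t' unfolding x'_def by (simp add: power2_eq_square algebra_simps)
    have "even (t - x)" using False x by simp
    then obtain e where e: "t - x = 2*e" by blast
    have "u - (x'^2+y^2) = 4*q * (e - 2^j)" unfolding eq e by (simp add: q_def algebra_simps)
    then have "u - (x'^2+y^2) = 2^(Suc j+3) * (e - 2^j)" using q4 by simp
    moreover have "odd x'" unfolding x'_def q_def using x by simp
    ultimately show ?thesis unfolding cong_iff_dvd_diff by (metis dvd_triv_left)
  qed
qed

lemma two_odd:
  fixes u :: int assumes "odd u"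
  shows "ss (2^(j+2)) u \<longleftrightarrow> u mod 4 = 1"
proof
  assume "ss (2^(j+2)) u"
  then obtain x y where "[u = x^2 + y^2] (mod 2^(j+2))" unfolding ss_def by blast
  then have "[u = x^2 + y^2] (mod 4)" using cong_dvd_modulus by (metis dvd_power_le dvd_refl le_add2 power2_eq_square numeral_Bit0 power_add numeral_times_numeral mult_2 dvd_triv_right)
  then have "u mod 4 = (x^2 mod 4 + y^2 mod 4) mod 4" unfolding cong_def by (simp add: mod_add_eq)
  moreover have "x^2 mod 4 = 0 \<or> x^2 mod 4 = 1" using sq_mod4[of x] by simp
  moreover have "y^2 mod 4 = 0 \<or> y^2 mod 4 = 1" using sq_mod4[of y] by simp
  moreover have "u mod 4 = 1 \<or> u mod 4 = 3" using assms by presburger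
  ultimately show "u mod 4 = 1" by auto
next
  assume "u mod 4 = 1"
  from two_lift[OF this, of j] obtain x y where "[u = x^2 + y^2] (mod 2^(j+3))" by blast
  moreover have "(2::int)^(j+2) dvd 2^(j+3)" by (rule le_imp_power_dvd) simp
  ultimately show "ss (2^(j+2)) u" unfolding ss_def using cong_dvd_modulus by blast
qed



lemma two_scale: "ss (2^(j+1)) (2*b) \<longleftrightarrow> ss (2^j) b"
proof
  assume "ss (2^(j+1)) (2*b)"
  then obtain x y where c: "[2*b = x^2 + y^2] (mod 2^(j+1))" unfolding ss_def by blast
  have "even (x^2+y^2)"
  proof -
    have "(2::int) dvd 2^(j+1)" by simp
    then have "[2*b = x^2 + y^2] (mod 2)" using cong_dvd_modulus[OF c] by blast
    then have "2 dvd 2*b - (x^2+y^2)" unfolding cong_iff_dvd_diff .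
    then have "2 dvd 2*b - (2*b - (x^2+y^2))" by (intro dvd_diff) simp_all
    then show ?thesis by simp
  qed
  then have "even (x+y)" by simp
  then obtain X where X: "x + y = 2*X" by blast
  define Y where "Y = X - y"
  have xe: "x = X + Y" "y = X - Y" unfolding Y_def using X by auto
  have "2^(j+1) dvd 2*b - (x^2+y^2)" using c unfolding cong_iff_dvd_diff .
  moreover have "2*b - (x^2+y^2) = 2*(b - (X^2+Y^2))" unfolding xe by (simp add: power2_eq_square algebra_simps)
  moreover have "(2::int)^(j+1) = 2 * 2^j" by simp
  ultimately have "2 * 2^j dvd 2*(b - (X^2+Y^2))" by simp
  then have "2^j dvd b - (X^2+Y^2)" by (simp only: mult_dvd_mono dvd_mult_cancel_left) simp
  then show "ss (2^j) b" unfolding ss_def cong_iff_dvd_diff by blast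
next
  assume "ss (2^j) b"
  then obtain u v where c: "2^j dvd b - (u^2+v^2)" unfolding ss_def cong_iff_dvd_diff by blast
  then have d: "2 * 2^j dvd 2 * (b - (u^2+v^2))" by (rule mult_dvd_mono[OF dvd_refl])
  have e1: "2 * (b - (u^2+v^2)) = 2*b - ((u+v)^2 + (u-v)^2)" by (simp add: power2_eq_square algebra_simps)
  have pw: "(2::int)^(j+1) = 2 * 2^j" by simp
  have "2 * 2^j dvd 2*b - ((u+v)^2 + (u-v)^2)" using d unfolding e1 .
  then have "2^(j+1) dvd 2*b - ((u+v)^2 + (u-v)^2)" unfolding pw .
  then show "ss (2^(j+1)) (2*b)" unfolding ss_def cong_iff_dvd_diff by blast
qed

lemma two_mem: "ss (2^(j+2)) a \<longleftrightarrow> a mod 4 = 1 \<or> (even a \<and> ss (2^(j+1)) (a div 2))"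
proof (cases "even a")
  case True
  then obtain b where b: "a = 2*b" by blast
  have "ss (2^(j+2)) (2*b) \<longleftrightarrow> ss (2^(j+1)) b" using two_scale[of "j+1" b] by simp
  moreover have "a mod 4 \<noteq> 1" using True by presburger
  ultimately show ?thesis using b by simp
next
  case False
  then show ?thesis using two_odd[OF False, of j] by simp
qed

definition ind :: "bool \<Rightarrow> int" where "ind b = (if b then 1 else 0)"

lemma ind_simps [simp]: "ind True = 1" "ind False = 0" by (auto simp: ind_def)

lemma sum_shift:
  fixes n c :: int and f :: "int \<Rightarrow> 'a::comm_monoid_add"
  assumes n: "n > 0" and per: "\<And>x. f (x mod n) = f x"
  shows "(\<Sum>a\<in>{0..<n}. f (a + c)) = (\<Sum>a\<in>{0..<n}. f a)"
proof (rule sum.reindex_bij_witness[of _ "\<lambda>b. (b - c) mod n" "\<lambda>a. (a + c) mod n"])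
  fix a assume a: "a \<in> {0..<n}"
  have "((a + c) mod n - c) mod n = ((a + c) - c) mod n" by (rule mod_diff_left_eq)
  then show "((a + c) mod n - c) mod n = a" using a by simp
  show "(a + c) mod n \<in> {0..<n}" using n by simp
  show "f ((a + c) mod n) = f (a + c)" using per by simp
next
  fix b assume b: "b \<in> {0..<n}"
  have "((b - c) mod n + c) mod n = ((b - c) + c) mod n" by (rule mod_add_left_eq)
  then show "((b - c) mod n + c) mod n = b" using b by simp
  show "(b - c) mod n \<in> {0..<n}" using n by simp
qed

lemma sum_dvd:
  fixes q N :: int and g :: "int \<Rightarrow> 'a::comm_monoid_add"
  assumes q: "q > 0" and N: "N \<ge> 0"
  shows "(\<Sum>a\<in>{0..<q*N}. if q dvd a then g (a div q) else 0) = (\<Sum>b\<in>{0..<N}. g b)"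
proof -
  have "(\<Sum>a\<in>{0..<q*N}. if q dvd a then g (a div q) else 0) = (\<Sum>a\<in>{a\<in>{0..<q*N}. q dvd a}. g (a div q))"
    by (rule sum.inter_filter[symmetric]) simp
  also have "\<dots> = (\<Sum>b\<in>{0..<N}. g b)"
  proof (rule sum.reindex_bij_witness[of _ "\<lambda>b. q * b" "\<lambda>a. a div q"])
    fix a assume a: "a \<in> {a\<in>{0..<q*N}. q dvd a}"
    then show "q * (a div q) = a" by simp
    from a obtain t where t: "a = q*t" by (auto elim: dvdE)
    then have "0 \<le> q*t" "q*t < q*N" using a by auto
    then have "0 \<le> t" "t < N" using q by (simp_all add: zero_le_mult_iff)
    then show "a div q \<in> {0..<N}" using t q by simp
    show "g (a div q) = g (a div q)" ..
  next
    fix b assume b: "b \<in> {0..<N}"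
    show "q * b div q = b" using q by simp
    show "q * b \<in> {a\<in>{0..<q*N}. q dvd a}" using b q by (auto simp: mult_strict_left_mono)
  qed
  finally show ?thesis .
qed

lemma sum_ind_dvd:
  fixes q N :: int assumes "q > 0" "N \<ge> 0"
  shows "(\<Sum>a\<in>{0..<q*N}. ind (q dvd a)) = N"
proof -
  have "(\<Sum>a\<in>{0..<q*N}. ind (q dvd a)) = (\<Sum>a\<in>{0..<q*N}. if q dvd a then (\<lambda>_. 1::int) (a div q) else 0)"
    by (rule sum.cong) (auto simp: ind_def)
  also have "\<dots> = (\<Sum>b\<in>{0..<N}. (1::int))" by (rule sum_dvd) (use assms in auto)
  finally show ?thesis using assms by simp
qed

lemma sum_one_int: "n \<ge> 0 \<Longrightarrow> (\<Sum>a\<in>{0..<n::int}. (1::int)) = n" by simp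

definition FF :: "int \<Rightarrow> int \<Rightarrow> int" where
  "FF n h = (\<Sum>a\<in>{0..<n}. ind (ss n a \<and> ss n (a + h)))"
definition GG :: "int \<Rightarrow> int" where
  "GG n = (\<Sum>a\<in>{0..<n}. ind (ss n a))"

lemma sum_dvd_pow:
  fixes P :: int and g :: "int \<Rightarrow> int"
  assumes "P > 0"
  shows "(\<Sum>a\<in>{0..<P^(j+2)}. if P^2 dvd a then g (a div P^2) else 0) = (\<Sum>b\<in>{0..<P^j}. g b)"
proof -
  have e: "P^(j+2) = P^2 * P^j" by (simp add: power_add mult.commute power2_eq_square)
  show ?thesis unfolding e by (rule sum_dvd) (use assms in auto)
qed

lemma sum_ind_dvd_pow:
  fixes P :: int
  assumes "P > 0"
  shows "(\<Sum>a\<in>{0..<P^(j+2)}. ind (P dvd a)) = P^(j+1)"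
proof -
  have e: "P^(j+2) = P * P^(j+1)" by simp
  show ?thesis unfolding e by (rule sum_ind_dvd) (use assms in auto)
qed

context
  fixes p :: nat
  assumes p: "prime p" "p mod 4 = 3"
begin

lemma P_facts: "int p > 1" "prime (int p)" "odd (int p)"
  using p prime_gt_1_nat by (auto, presburger)

lemma ss_p3': "ss (int p ^ (j+2)) a \<longleftrightarrow> \<not> int p dvd a \<or> (int p ^ 2 dvd a \<and> ss (int p ^ j) (a div int p ^ 2))"
  using ss_p3[OF p] .

lemma dvd_P2: "int p ^ 2 dvd a \<Longrightarrow> int p dvd a"
  by (metis dvd_mult_left power2_eq_square)

lemma p3_G: "GG (int p ^ (j+2)) = int p ^ (j+2) - int p ^ (j+1) + GG (int p ^ j)"
proof -
  define P where "P = int p"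
  have P0: "P > 0" unfolding P_def using P_facts by simp
  have pw: "ind (ss (P^(j+2)) a) = (1 - ind (P dvd a)) + (if P^2 dvd a then ind (ss (P^j) (a div P^2)) else 0)" for a
    using ss_p3'[of j a] dvd_P2[of a] unfolding P_def by (auto simp: ind_def)
  have "GG (P^(j+2)) = (\<Sum>a\<in>{0..<P^(j+2)}. (1 - ind (P dvd a)) + (if P^2 dvd a then ind (ss (P^j) (a div P^2)) else 0))"
    unfolding GG_def using pw by simp
  also have "\<dots> = (\<Sum>a\<in>{0..<P^(j+2)}. 1) - (\<Sum>a\<in>{0..<P^(j+2)}. ind (P dvd a)) + (\<Sum>a\<in>{0..<P^(j+2)}. if P^2 dvd a then ind (ss (P^j) (a div P^2)) else 0)"
    by (simp add: sum.distrib sum_subtractf)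
  also have "\<dots> = P^(j+2) - P^(j+1) + GG (P^j)"
    using sum_ind_dvd_pow[OF P0, of j] sum_dvd_pow[OF P0, where j=j and g="\<lambda>b. ind (ss (P^j) b)"] P0
    unfolding GG_def by simp
  finally show ?thesis unfolding P_def .
qed


lemma p3_F_unit:
  assumes h: "\<not> int p dvd h"
  shows "FF (int p ^ (j+2)) h = int p ^ (j+2) - 2 * int p ^ (j+1) + 2 * GG (int p ^ j)"
proof -
  define P where "P = int p"
  define n where "n = P^(j+2)"
  have P0: "P > 0" unfolding P_def using P_facts by simp
  have n0: "n > 0" unfolding n_def using P0 by simp
  have Pn: "P dvd n" unfolding n_def by simp
  define \<phi> where "\<phi> x = ind (P dvd x \<and> ss n x)" for x
  have u: "\<And>x. \<not> P dvd x \<Longrightarrow> ss n x" using ss_p3' unfolding n_def P_def by blast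
  have pw: "ind (ss n a \<and> ss n (a+h)) = 1 - ind (P dvd a) - ind (P dvd (a+h)) + \<phi> a + \<phi> (a+h)" for a
  proof -
    have "\<not> (P dvd a \<and> P dvd (a+h))"
    proof
      assume "P dvd a \<and> P dvd (a+h)"
      then have "P dvd (a+h) - a" by (intro dvd_diff) auto
      then show False using h unfolding P_def by simp
    qed
    then show ?thesis unfolding \<phi>_def by (cases "P dvd a"; cases "P dvd (a+h)") (auto simp: ind_def u)
  qed
  have s1: "(\<Sum>a\<in>{0..<n}. ind (P dvd (a+h))) = (\<Sum>a\<in>{0..<n}. ind (P dvd a))"
    by (rule sum_shift[OF n0]) (simp add: dvd_mod_iff[OF Pn])
  have s2: "(\<Sum>a\<in>{0..<n}. \<phi> (a+h)) = (\<Sum>a\<in>{0..<n}. \<phi> a)"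
    by (rule sum_shift[OF n0]) (simp add: \<phi>_def dvd_mod_iff[OF Pn] ss_mod)
  have \<phi>e: "\<phi> a = (if P^2 dvd a then ind (ss (P^j) (a div P^2)) else 0)" for a
    using ss_p3'[of j a] dvd_P2[of a] unfolding \<phi>_def n_def P_def by (auto simp: ind_def)
  have s3: "(\<Sum>a\<in>{0..<n}. \<phi> a) = GG (P^j)"
    unfolding \<phi>e n_def GG_def by (rule sum_dvd_pow[OF P0])
  have s4: "(\<Sum>a\<in>{0..<n}. ind (P dvd a)) = P^(j+1)"
    unfolding n_def by (rule sum_ind_dvd_pow[OF P0])
  have "FF n h = (\<Sum>a\<in>{0..<n}. 1 - ind (P dvd a) - ind (P dvd (a+h)) + \<phi> a + \<phi> (a+h))"
    unfolding FF_def using pw by simp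
  also have "\<dots> = (\<Sum>a\<in>{0..<n}. 1) - (\<Sum>a\<in>{0..<n}. ind (P dvd a)) - (\<Sum>a\<in>{0..<n}. ind (P dvd (a+h)))
      + (\<Sum>a\<in>{0..<n}. \<phi> a) + (\<Sum>a\<in>{0..<n}. \<phi> (a+h))"
    by (simp add: sum.distrib sum_subtractf)
  also have "\<dots> = n - 2 * P^(j+1) + 2 * GG (P^j)"
    unfolding s1 s2 s3 s4 using n0 by simp
  finally show ?thesis unfolding n_def P_def .
qed

lemma p3_F_one:
  assumes h1: "int p dvd h" and h2: "\<not> int p ^ 2 dvd h"
  shows "FF (int p ^ (j+2)) h = int p ^ (j+2) - int p ^ (j+1)"
proof -
  define P where "P = int p"
  define n where "n = P^(j+2)"
  have P0: "P > 0" unfolding P_def using P_facts by simp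
  have n0: "n > 0" unfolding n_def using P0 by simp
  have m: "ss n x \<longleftrightarrow> \<not> P dvd x \<or> (P^2 dvd x \<and> ss (P^j) (x div P^2))" for x
    using ss_p3' unfolding n_def P_def by blast
  have pw: "ind (ss n a \<and> ss n (a+h)) = 1 - ind (P dvd a)" for a
  proof (cases "P dvd a")
    case False
    then have "\<not> P dvd (a+h)" using h1 unfolding P_def by (metis add_diff_cancel_right' dvd_diff)
    then show ?thesis using False m by simp
  next
    case True
    show ?thesis
    proof (cases "P^2 dvd a")
      case True2: True
      have "\<not> P^2 dvd (a+h)"
      proof
        assume "P^2 dvd (a+h)"
        then have "P^2 dvd (a+h) - a" using True2 by (intro dvd_diff)
        then show False using h2 unfolding P_def by simp
      qed
      moreover have "P dvd (a+h)" using True h1 unfolding P_def by simp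
      ultimately show ?thesis using True m by simp
    next
      case False
      then show ?thesis using True m by simp
    qed
  qed
  have "FF n h = (\<Sum>a\<in>{0..<n}. 1 - ind (P dvd a))" unfolding FF_def using pw by simp
  also have "\<dots> = n - P^(j+1)" using sum_ind_dvd_pow[OF P0, of j] n0 unfolding n_def by (simp add: sum_subtractf)
  finally show ?thesis unfolding n_def P_def .
qed

lemma p3_F_two:
  assumes h2: "int p ^ 2 dvd h"
  shows "FF (int p ^ (j+2)) h = int p ^ (j+2) - int p ^ (j+1) + FF (int p ^ j) (h div int p ^ 2)"
proof -
  define P where "P = int p"
  define n where "n = P^(j+2)"
  have P0: "P > 0" unfolding P_def using P_facts by simp
  have n0: "n > 0" unfolding n_def using P0 by simp
  have m: "ss n x \<longleftrightarrow> \<not> P dvd x \<or> (P^2 dvd x \<and> ss (P^j) (x div P^2))" for x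
    using ss_p3' unfolding n_def P_def by blast
  have h1: "P dvd h" using h2 dvd_P2 unfolding P_def by blast
  have pw: "ind (ss n a \<and> ss n (a+h)) = (1 - ind (P dvd a)) +
     (if P^2 dvd a then ind (ss (P^j) (a div P^2) \<and> ss (P^j) (a div P^2 + h div P^2)) else 0)" for a
  proof (cases "P dvd a")
    case False
    then have "\<not> P dvd (a+h)" using h1 by (metis add_diff_cancel_right' dvd_diff)
    moreover have "\<not> P^2 dvd a" using False dvd_P2 unfolding P_def by blast
    ultimately show ?thesis using False m by simp
  next
    case True
    show ?thesis
    proof (cases "P^2 dvd a")
      case True2: True
      have d: "P^2 dvd (a+h)" using True2 h2 unfolding P_def by simp
      have "(a+h) div P^2 = a div P^2 + h div P^2" using True2 by (simp add: div_plus_div_distrib_dvd_left)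
      moreover have "P dvd (a+h)" using d dvd_P2 unfolding P_def by blast
      ultimately show ?thesis using True True2 d m by simp
    next
      case False
      then show ?thesis using True m by simp
    qed
  qed
  have s3: "(\<Sum>a\<in>{0..<n}. if P^2 dvd a then ind (ss (P^j) (a div P^2) \<and> ss (P^j) (a div P^2 + h div P^2)) else 0)
     = FF (P^j) (h div P^2)"
    unfolding n_def FF_def by (rule sum_dvd_pow[OF P0])
  have "FF n h = (\<Sum>a\<in>{0..<n}. (1 - ind (P dvd a)) +
     (if P^2 dvd a then ind (ss (P^j) (a div P^2) \<and> ss (P^j) (a div P^2 + h div P^2)) else 0))"
    unfolding FF_def using pw by simp
  also have "\<dots> = (\<Sum>a\<in>{0..<n}. 1) - (\<Sum>a\<in>{0..<n}. ind (P dvd a)) + FF (P^j) (h div P^2)"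
    unfolding s3[symmetric] by (simp add: sum.distrib sum_subtractf)
  also have "\<dots> = n - P^(j+1) + FF (P^j) (h div P^2)"
    using sum_ind_dvd_pow[OF P0, of j] n0 unfolding n_def by simp
  finally show ?thesis unfolding n_def P_def .
qed
end


lemma ss_zero: "ss n 0" unfolding ss_def by (intro exI[of _ 0]) simp

lemma p1_F:
  assumes "prime p" "p mod 4 = 1"
  shows "FF (int p ^ k) h = int p ^ k"
proof -
  have "FF (int p ^ k) h = (\<Sum>a\<in>{0..<int p ^ k}. 1)" unfolding FF_def using ss_p1[OF assms] by simp
  then show ?thesis by simp
qed

context
  fixes p :: nat
  assumes p: "prime p" "p mod 4 = 3"
begin

lemma p3_G0: "GG (int p ^ 0) = 1"
proof -
  have "{0..<(1::int)} = {0}" by auto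
  then show ?thesis unfolding GG_def by (simp add: ss_zero)
qed

lemma p3_G1: "GG (int p ^ 1) = int p"
proof -
  have "GG (int p ^ 1) = (\<Sum>a\<in>{0..<int p}. 1)" unfolding GG_def
  proof (rule sum.cong)
    fix a assume a: "a \<in> {0..<int p}"
    show "ind (ss (int p ^ 1) a) = 1"
    proof (cases "a = 0")
      case True then show ?thesis by (simp add: ss_zero)
    next
      case False
      then have "\<not> int p dvd a" using a by (auto dest: zdvd_imp_le)
      then show ?thesis using ss_unit[OF P_facts(2,3)[OF p], of a 1] by simp
    qed
  qed simp
  then show ?thesis by simp
qed

lemma p3_G_closed: "(int p + 1) * GG (int p ^ k) = int p ^ (k+1) + (if even k then 1 else int p)"
proof (induction k rule: less_induct)
  case (less k)
  show ?case
  proof (cases "k < 2")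
    case True
    then have "k = 0 \<or> k = 1" by auto
    then show ?thesis using p3_G0 p3_G1 by (auto simp: algebra_simps power2_eq_square)
  next
    case False
    then obtain j where j: "k = j + 2" by (metis add.commute le_Suc_ex not_less)
    have IH: "(int p + 1) * GG (int p ^ j) = int p ^ (j+1) + (if even j then 1 else int p)"
      using less.IH[of j] j by simp
    have "(int p + 1) * GG (int p ^ k) = (int p + 1) * (int p ^ (j+2) - int p ^ (j+1)) + (int p + 1) * GG (int p ^ j)"
      unfolding j p3_G[OF p] by (simp add: algebra_simps)
    also have "\<dots> = int p ^ (j+2+1) - int p ^ (j+1) + (int p ^ (j+1) + (if even j then 1 else int p))"
      unfolding IH by (simp add: algebra_simps power_add)
    finally show ?thesis unfolding j by simp
  qed
qed

end

lemma sum_mod4_one: "(\<Sum>a\<in>{0..<(2::int)^(j+2)}. ind (a mod 4 = 1)) = 2^j"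
proof -
  have n0: "(2::int)^(j+2) > 0" by simp
  have "(\<Sum>a\<in>{0..<(2::int)^(j+2)}. ind (a mod 4 = 1)) = (\<Sum>a\<in>{0..<(2::int)^(j+2)}. ind (4 dvd (a + -1)))"
    by (rule sum.cong) (auto simp: ind_def, presburger+)
  also have "\<dots> = (\<Sum>a\<in>{0..<(2::int)^(j+2)}. ind (4 dvd a))"
  proof (rule sum_shift[OF n0])
    have "(4::int) dvd 2^(j+2)" by (simp add: power_add)
    then show "ind (4 dvd (x mod 2^(j+2))) = ind (4 dvd x)" for x :: int by (simp add: dvd_mod_iff)
  qed
  also have "\<dots> = 2^j"
  proof -
    have e: "(2::int)^(j+2) = 4 * 2^j" by (simp add: power_add)
    show ?thesis unfolding e by (rule sum_ind_dvd) auto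
  qed
  finally show ?thesis .
qed

lemma two_G: "GG (2^(j+2)) = 2^j + GG (2^(j+1))"
proof -
  have pw: "ind (ss (2^(j+2)) a) = ind (a mod 4 = 1) + (if 2 dvd a then ind (ss (2^(j+1)) (a div 2)) else 0)" for a
    using two_mem[of j a] by (auto simp: ind_def; presburger)
  have e: "(2::int)^(j+2) = 2 * 2^(j+1)" by simp
  have s: "(\<Sum>a\<in>{0..<(2::int)^(j+2)}. if 2 dvd a then ind (ss (2^(j+1)) (a div 2)) else 0) = GG (2^(j+1))"
    unfolding e GG_def by (rule sum_dvd) auto
  show ?thesis unfolding GG_def[of "2^(j+2)"] pw sum.distrib sum_mod4_one s ..
qed

lemma two_G1: "GG 2 = 2"
proof -
  have "{0..<(2::int)} = {0,1}" by auto
  moreover have "ss 2 1" unfolding ss_def by (intro exI[of _ 1] exI[of _ 0]) simp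
  ultimately show ?thesis unfolding GG_def by (simp add: ss_zero)
qed

lemma two_G_closed: "GG (2^(j+1)) = 2^j + 1"
proof (induction j)
  case 0 then show ?case using two_G1 by simp
next
  case (Suc j)
  then show ?case using two_G[of j] by simp
qed

lemma two_F_odd:
  assumes h: "odd h"
  shows "FF (2^(j+2)) h = GG (2^(j+1))"
proof -
  define n :: int where "n = 2^(j+2)"
  have n0: "n > 0" unfolding n_def by simp
  have m: "ss n x \<longleftrightarrow> x mod 4 = 1 \<or> (even x \<and> ss (2^(j+1)) (x div 2))" for x
    unfolding n_def by (rule two_mem)
  define \<phi> where "\<phi> x = ind (even x \<and> ss n x)" for x
  define \<psi> where "\<psi> x = ind ((x - h) mod 4 = 1) * \<phi> x" for x
  have pw: "ind (ss n a \<and> ss n (a+h)) = \<psi> (a+h) + ind ((a+h) mod 4 = 1) * \<phi> a" for a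
  proof (cases "even a")
    case True
    have o: "odd (a+h)" using True h by simp
    have "(a+h) mod 4 = 1 \<Longrightarrow> odd (a+h)" by presburger
    then have "ss n (a+h) \<longleftrightarrow> (a+h) mod 4 = 1" using m[of "a+h"] o by blast
    moreover have "\<phi> (a+h) = 0" unfolding \<phi>_def using o by simp
    moreover have "\<phi> a = ind (ss n a)" unfolding \<phi>_def using True by simp
    ultimately show ?thesis unfolding \<psi>_def by (auto simp: ind_def)
  next
    case False
    have e: "even (a+h)" using False h by simp
    have "a mod 4 = 1 \<or> a mod 4 = 3" using False by presburger
    then have "ss n a \<longleftrightarrow> a mod 4 = 1" using m[of a] False by auto
    moreover have "\<phi> a = 0" unfolding \<phi>_def using False by simp
    moreover have "\<phi> (a+h) = ind (ss n (a+h))" unfolding \<phi>_def using e by simp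
    ultimately show ?thesis unfolding \<psi>_def by (auto simp: ind_def)
  qed
  have dn4: "(4::int) dvd n" unfolding n_def by (simp add: power_add)
  have dn2: "(2::int) dvd n" unfolding n_def by (simp add: power_add)
  have per\<phi>: "\<phi> (x mod n) = \<phi> x" for x
    unfolding \<phi>_def using dvd_mod_iff[OF dn2, of x] ss_mod[of n x] by simp
  have per4: "(x mod n - h) mod 4 = (x - h) mod 4" for x
  proof -
    have "(x mod n - h) mod 4 = ((x mod n) mod 4 - h) mod 4" by (simp add: mod_diff_left_eq)
    also have "(x mod n) mod 4 = x mod 4" using dn4 by (simp add: mod_mod_cancel)
    also have "(x mod 4 - h) mod 4 = (x - h) mod 4" by (simp add: mod_diff_left_eq)
    finally show ?thesis .
  qed
  have s1: "(\<Sum>a\<in>{0..<n}. \<psi> (a+h)) = (\<Sum>a\<in>{0..<n}. \<psi> a)"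
    by (rule sum_shift[OF n0]) (simp add: \<psi>_def per\<phi> per4)
  have pw2: "\<psi> a + ind ((a+h) mod 4 = 1) * \<phi> a = \<phi> a" for a
  proof (cases "even a")
    case True
    have "ind ((a - h) mod 4 = 1) + ind ((a+h) mod 4 = 1) = 1" using True h
      by (auto simp: ind_def; presburger)
    moreover have "\<psi> a + ind ((a+h) mod 4 = 1) * \<phi> a = \<phi> a * (ind ((a - h) mod 4 = 1) + ind ((a+h) mod 4 = 1))"
      unfolding \<psi>_def by (simp add: algebra_simps)
    ultimately show ?thesis by simp
  next
    case False
    then show ?thesis unfolding \<psi>_def \<phi>_def by simp
  qed
  have \<phi>e: "\<phi> a = (if 2 dvd a then ind (ss (2^(j+1)) (a div 2)) else 0)" for a
  proof (cases "even a")
    case True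
    then have "a mod 4 \<noteq> 1" by presburger
    then show ?thesis unfolding \<phi>_def using m[of a] True by simp
  qed (simp add: \<phi>_def)
  have e: "n = 2 * 2^(j+1)" unfolding n_def by simp
  have s3: "(\<Sum>a\<in>{0..<n}. \<phi> a) = GG (2^(j+1))"
    unfolding \<phi>e GG_def e by (rule sum_dvd) auto
  have "FF n h = (\<Sum>a\<in>{0..<n}. \<psi> (a+h)) + (\<Sum>a\<in>{0..<n}. ind ((a+h) mod 4 = 1) * \<phi> a)"
    unfolding FF_def pw sum.distrib ..
  also have "\<dots> = (\<Sum>a\<in>{0..<n}. \<psi> a + ind ((a+h) mod 4 = 1) * \<phi> a)"
    unfolding s1 sum.distrib ..
  also have "\<dots> = GG (2^(j+1))" unfolding pw2 s3 ..
  finally show ?thesis unfolding n_def .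
qed

lemma two_F_even:
  assumes h: "even h"
  shows "FF (2^(j+2)) h = (if 4 dvd h then 2^j else 0) + FF (2^(j+1)) (h div 2)"
proof -
  define n :: int where "n = 2^(j+2)"
  have m: "ss n x \<longleftrightarrow> x mod 4 = 1 \<or> (even x \<and> ss (2^(j+1)) (x div 2))" for x
    unfolding n_def by (rule two_mem)
  have pw: "ind (ss n a \<and> ss n (a+h)) = ind (a mod 4 = 1 \<and> 4 dvd h) +
      (if 2 dvd a then ind (ss (2^(j+1)) (a div 2) \<and> ss (2^(j+1)) (a div 2 + h div 2)) else 0)" for a
  proof (cases "even a")
    case True
    have "a mod 4 \<noteq> 1" "(a+h) mod 4 \<noteq> 1" using True h by presburger+
    moreover have "even (a+h)" using True h by simp
    moreover have "(a+h) div 2 = a div 2 + h div 2" using True by (simp add: div_plus_div_distrib_dvd_left)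
    ultimately show ?thesis using m[of a] m[of "a+h"] True by simp
  next
    case False
    have "odd (a+h)" using False h by simp
    have "ss n a \<longleftrightarrow> a mod 4 = 1" using m[of a] False by auto
    moreover have "ss n (a+h) \<longleftrightarrow> (a+h) mod 4 = 1" using m[of "a+h"] \<open>odd (a+h)\<close> by auto
    moreover have "(a mod 4 = 1 \<and> (a+h) mod 4 = 1) \<longleftrightarrow> (a mod 4 = 1 \<and> 4 dvd h)" using h by presburger
    ultimately show ?thesis using False by simp
  qed
  have s1: "(\<Sum>a\<in>{0..<n}. ind (a mod 4 = 1 \<and> 4 dvd h)) = (if 4 dvd h then 2^j else 0)"
    using sum_mod4_one[of j] unfolding n_def by simp
  have e: "n = 2 * 2^(j+1)" unfolding n_def by simp
  have s2: "(\<Sum>a\<in>{0..<n}. if 2 dvd a then ind (ss (2^(j+1)) (a div 2) \<and> ss (2^(j+1)) (a div 2 + h div 2)) else 0)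
      = FF (2^(j+1)) (h div 2)"
    unfolding e FF_def by (rule sum_dvd) auto
  show ?thesis unfolding n_def[symmetric] FF_def[of n] pw sum.distrib s1 s2 ..
qed



lemma ind_of_bool: "ind b = of_bool b" by (simp add: ind_def)

lemma med_ratio_FF:
  assumes "prime p"
  shows "med_ratio p h k = real_of_int (FF (int p ^ k) h) / real p ^ k"
proof -
  define n where "n = int p ^ k"
  have n0: "n > 0" unfolding n_def using assms prime_gt_0_nat by simp
  have Sq: "Sq p k = {b \<in> {0..<n}. ss n b}" unfolding Sq_def ss_def n_def ..
  have set: "{a \<in> {0..<int p ^ k}. a \<in> Sq p k \<and> (a + h) mod (int p ^ k) \<in> Sq p k}
      = {0..<n} \<inter> {a. ss n a \<and> ss n (a+h)}"
    unfolding n_def[symmetric] Sq using n0 by (auto simp: ss_mod)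
  have F: "FF n h = int (card ({0..<n} \<inter> {a. ss n a \<and> ss n (a+h)}))"
    unfolding FF_def ind_of_bool by simp
  have "med_ratio p h k = real (card ({0..<n} \<inter> {a. ss n a \<and> ss n (a+h)})) / real p ^ k"
    unfolding med_ratio_def set ..
  also have "\<dots> = real_of_int (FF n h) / real p ^ k" unfolding F by simp
  finally show ?thesis unfolding n_def .
qed

lemma p3_g_lim:
  assumes p: "prime p" "p mod 4 = 3"
  shows "(\<lambda>k. real_of_int (GG (int p ^ k)) / real p ^ k) \<longlonglongrightarrow> real p / (real p + 1)"
proof -
  define q where "q = real p"
  have q1: "q > 1" unfolding q_def using prime_gt_1_nat[OF p(1)] by simp
  define e where "e k = real_of_int (if even k then 1 else int p)" for k :: nat
  have e_b: "0 \<le> e k" "e k \<le> q" for k unfolding e_def q_def using q1 q_def by auto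
  have cl: "(q+1) * real_of_int (GG (int p ^ k)) = q^(k+1) + e k" for k
    using arg_cong[OF p3_G_closed[OF p, of k], of real_of_int] unfolding q_def e_def by simp
  have eq: "real_of_int (GG (int p ^ k)) / real p ^ k = q/(q+1) + e k / ((q+1) * q^k)" for k
  proof -
    have qk: "q^k > 0" using q1 by simp
    have "real_of_int (GG (int p ^ k)) = (q*q^k + e k)/(q+1)" using cl[of k] q1 by (simp add: field_simps)
    then have "real_of_int (GG (int p ^ k)) / q^k = (q*q^k + e k)/((q+1)*q^k)" by simp
    also have "\<dots> = (q*q^k)/((q+1)*q^k) + e k/((q+1)*q^k)" by (rule add_divide_distrib)
    also have "(q*q^k)/((q+1)*q^k) = q/(q+1)" using qk by simp
    finally show ?thesis unfolding q_def .
  qed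
  have "(\<lambda>k. e k / ((q+1) * q^k)) \<longlonglongrightarrow> 0"
  proof (rule Lim_null_comparison)
    show "eventually (\<lambda>k. norm (e k / ((q+1) * q^k)) \<le> q/(q+1) * (1/q)^k) sequentially"
    proof (rule always_eventually, rule allI)
      fix k
      have pos: "(q+1) * q^k > 0" using q1 by simp
      have "norm (e k / ((q+1) * q^k)) = e k / ((q+1) * q^k)" using e_b pos by simp
      also have "\<dots> \<le> q / ((q+1)*q^k)" using e_b pos by (simp add: divide_right_mono)
      also have "\<dots> = q/(q+1) * (1/q)^k" by (simp add: power_one_over)
      finally show "norm (e k / ((q+1) * q^k)) \<le> q/(q+1) * (1/q)^k" .
    qed
    show "(\<lambda>k. q/(q+1) * (1/q)^k) \<longlonglongrightarrow> 0" using q1 by (intro tendsto_mult_right_zero LIMSEQ_power_zero) simp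
  qed
  then have "(\<lambda>k. q/(q+1) + e k / ((q+1) * q^k)) \<longlonglongrightarrow> q/(q+1) + 0" by (intro tendsto_add tendsto_const)
  then show ?thesis unfolding eq q_def by simp
qed

definition D3 :: "real \<Rightarrow> nat \<Rightarrow> real" where "D3 r m = (1 - r^(m+1)) / (1 + r)"

lemma p3_lim:
  assumes p: "prime p" "p mod 4 = 3"
  shows "\<forall>h. h > 0 \<longrightarrow> multiplicity (int p) h = m \<longrightarrow> med_ratio p h \<longlonglongrightarrow> D3 (1 / real p) m"
proof (induction m rule: less_induct)
  case (less m)
  define q where "q = real p"
  define r where "r = 1 / q"
  define P where "P = int p"
  have q1: "q > 1" unfolding q_def using prime_gt_1_nat[OF p(1)] by simp
  have r0: "r > 0" unfolding r_def using q1 by simp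
  have Pp: "prime P" unfolding P_def using p by simp
  have nu: "\<not> is_unit P" using Pp not_prime_unit by blast
  have P0: "P \<noteq> 0" using Pp by auto
  show ?case
  proof (intro allI impI)
    fix h :: int assume h0: "h > 0" and hm: "multiplicity (int p) h = m"
    have hm': "multiplicity P h = m" using hm unfolding P_def .
    have mr: "med_ratio p h k = real_of_int (FF (int p ^ k) h) / q ^ k" for h k
      unfolding q_def by (rule med_ratio_FF[OF p(1)])
    consider "m = 0" | "m = 1" | m' where "m = m' + 2"
    proof (cases "m < 2")
      case False
      then have "m = (m - 2) + 2" by simp
      then show ?thesis using that(3) by blast
    next
      case True
      then have "m = 0 \<or> m = 1" by auto
      then show ?thesis using that(1,2) by blast
    qed
    then show "med_ratio p h \<longlonglongrightarrow> D3 (1 / real p) m"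
    proof cases
      case 1
      have nd: "\<not> int p dvd h" using hm' 1 multiplicity_eq_zero_iff[where x=h and p=P] h0 nu unfolding P_def by simp
      have e: "med_ratio p h (k+2) = (1 - 2*r) + 2*r^2 * (real_of_int (GG (int p ^ k)) / q ^ k)" for k
        unfolding mr p3_F_unit[OF p nd] r_def using q1 by (simp add: q_def field_simps power_add power2_eq_square)
      have lq: "q/(q+1) = 1/(1+r)" unfolding r_def using q1 by (simp add: field_simps)
      have "(\<lambda>k. (1 - 2*r) + 2*r^2 * (real_of_int (GG (int p ^ k)) / q ^ k)) \<longlonglongrightarrow> (1 - 2*r) + 2*r^2 * (q/(q+1))"
        by (intro tendsto_add tendsto_const tendsto_mult) (rule p3_g_lim[OF p, folded q_def])
      moreover have "(1 - 2*r) + 2*r^2 * (q/(q+1)) = D3 r m" unfolding D3_def 1 lq using r0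
        by (simp add: field_simps power2_eq_square)
      ultimately have "(\<lambda>k. med_ratio p h (k+2)) \<longlonglongrightarrow> D3 r m" unfolding e by simp
      then show ?thesis unfolding r_def q_def by (rule LIMSEQ_offset)
    next
      case 2
      have d1: "int p dvd h" using power_dvd_iff_le_multiplicity[where p=P and n=1 and x=h] hm' 2 h0 prime_gt_1_nat[OF p(1)] unfolding P_def by simp
      have d2: "\<not> int p ^ 2 dvd h" using power_dvd_iff_le_multiplicity[where p=P and n=2 and x=h] hm' 2 h0 prime_gt_1_nat[OF p(1)] unfolding P_def by simp
      have e: "med_ratio p h (k+2) = 1 - r" for k
        unfolding mr p3_F_one[OF p d1 d2] r_def using q1 by (simp add: q_def field_simps power_add)
      moreover have "1 - r = D3 r m" unfolding D3_def 2 using r0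
        by (simp add: field_simps power2_eq_square)
      ultimately have "(\<lambda>k. med_ratio p h (k+2)) \<longlonglongrightarrow> D3 r m" by simp
      then show ?thesis unfolding r_def q_def by (rule LIMSEQ_offset)
    next
      case 3
      have d2: "int p ^ 2 dvd h" using power_dvd_iff_le_multiplicity[where p=P and n=2 and x=h] hm' 3 h0 prime_gt_1_nat[OF p(1)] unfolding P_def by simp
      define h2 where "h2 = h div int p ^ 2"
      have hh: "h = P * (P * h2)" unfolding h2_def P_def using d2 by (simp add: power2_eq_square mult.assoc[symmetric])
      have Ppos: "P > 0" unfolding P_def using q1 q_def by simp
      have h20: "h2 > 0" using h0 hh Ppos by (simp add: zero_less_mult_iff)
      have "multiplicity P h = Suc (Suc (multiplicity P h2))" unfolding hh
        using multiplicity_times_same[where p=P and x="P*h2"] multiplicity_times_same[where p=P and x=h2] P0 nu h20 by simp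
      then have m2: "multiplicity (int p) h2 = m'" using hm' 3 h0 prime_gt_1_nat[OF p(1)] unfolding P_def by simp
      have IH: "med_ratio p h2 \<longlonglongrightarrow> D3 r m'" using less.IH[of m'] 3 h20 m2 unfolding r_def q_def by simp
      have e: "med_ratio p h (k+2) = (1 - r) + r^2 * med_ratio p h2 k" for k
        unfolding mr p3_F_two[OF p d2] h2_def[symmetric] r_def using q1 by (simp add: q_def field_simps power_add power2_eq_square)
      have "(\<lambda>k. (1 - r) + r^2 * med_ratio p h2 k) \<longlonglongrightarrow> (1 - r) + r^2 * D3 r m'"
        by (intro tendsto_add tendsto_const tendsto_mult IH)
      moreover have "(1 - r) + r^2 * D3 r m' = D3 r m" unfolding D3_def 3 using r0
        by (simp add: field_simps power_add power2_eq_square)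
      ultimately have "(\<lambda>k. med_ratio p h (k+2)) \<longlonglongrightarrow> D3 r m" unfolding e by simp
      then show ?thesis unfolding r_def q_def by (rule LIMSEQ_offset)
    qed
  qed
qed

definition D2 :: "nat \<Rightarrow> real" where
  "D2 m = (if m = 0 then 1/4 else (2 ^ (m + 1) - 3) / 2 ^ (m + 2))"

lemma two_lim:
  "\<forall>h. h > 0 \<longrightarrow> multiplicity (2::int) h = m \<longrightarrow> med_ratio 2 h \<longlonglongrightarrow> D2 m"
proof (induction m)
  have nu: "\<not> is_unit (2::int)" by simp
  have mr: "med_ratio 2 h k = real_of_int (FF (2 ^ k) h) / 2 ^ k" for h k
    using med_ratio_FF[of 2 h k] by simp
  {
    case 0
    show ?case
    proof (intro allI impI)
      fix h :: int assume h0: "h > 0" and hm: "multiplicity 2 h = 0"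
      have od: "odd h" using hm multiplicity_eq_zero_iff[where x=h and p=2] h0 nu by simp
      have e: "med_ratio 2 h (k+2) = 1/4 + 1/4 * (1/2)^k" for k
        unfolding mr two_F_odd[OF od] two_G_closed by (simp add: field_simps power_add power_one_over)
      have "(\<lambda>k. 1/4 + 1/4 * (1/2::real)^k) \<longlonglongrightarrow> 1/4 + 1/4 * 0"
        by (intro tendsto_add tendsto_const tendsto_mult LIMSEQ_power_zero) simp
      then have "(\<lambda>k. med_ratio 2 h (k+2)) \<longlonglongrightarrow> D2 0" unfolding e D2_def by simp
      then show "med_ratio 2 h \<longlonglongrightarrow> D2 0" by (rule LIMSEQ_offset)
    qed
  next
    case (Suc m)
    show ?case
    proof (intro allI impI)
      fix h :: int assume h0: "h > 0" and hm: "multiplicity 2 h = Suc m"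
      have ev: "even h" using hm multiplicity_eq_zero_iff[where x=h and p=2] h0 nu by simp
      define h1 where "h1 = h div 2"
      have hh: "h = 2 * h1" unfolding h1_def using ev by simp
      have h10: "h1 > 0" using h0 hh by simp
      have "multiplicity 2 h = Suc (multiplicity 2 h1)" unfolding hh
        using multiplicity_times_same[where p=2 and x=h1] h10 nu by simp
      then have m1: "multiplicity 2 h1 = m" using hm by simp
      have IH: "med_ratio 2 h1 \<longlonglongrightarrow> D2 m" using Suc.IH h10 m1 by blast
      have d4: "4 dvd h \<longleftrightarrow> m \<ge> 1"
        using power_dvd_iff_le_multiplicity[where p=2 and n=2 and x=h] hm h0 nu by simp
      have e: "med_ratio 2 h (k+2) = (if m \<ge> 1 then 1/4 else 0) + 1/2 * med_ratio 2 h1 (k+1)" for k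
        unfolding mr two_F_even[OF ev] h1_def[symmetric] d4 by (simp add: field_simps power_add)
      have "(\<lambda>k. med_ratio 2 h1 (k+1)) \<longlonglongrightarrow> D2 m" using IH by (rule LIMSEQ_ignore_initial_segment)
      then have "(\<lambda>k. (if m \<ge> 1 then 1/4 else 0) + 1/2 * med_ratio 2 h1 (k+1)) \<longlonglongrightarrow> (if m \<ge> 1 then 1/4 else 0) + 1/2 * D2 m"
        by (intro tendsto_add tendsto_const tendsto_mult)
      moreover have "(if m \<ge> 1 then 1/4 else 0) + 1/2 * D2 m = D2 (Suc m)"
        unfolding D2_def by (simp add: field_simps power_add)
      ultimately have "(\<lambda>k. med_ratio 2 h (k+2)) \<longlonglongrightarrow> D2 (Suc m)" unfolding e by simp
      then show "med_ratio 2 h \<longlonglongrightarrow> D2 (Suc m)" by (rule LIMSEQ_offset)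
    qed
  }
qed

theorem proposition5p1:
  fixes p :: nat and h :: int
  assumes "prime p" and "h > 0"
  shows "convergent (med_ratio p h)
    \<and> (p mod 4 = 1 \<longrightarrow> Med2 p h = 1)
    \<and> (p mod 4 = 3 \<longrightarrow> Med2 p h =
          (1 - real p powi (- (int (multiplicity (int p) h) + 1))) / (1 + 1 / real p))
    \<and> (p = 2 \<longrightarrow> multiplicity 2 h = 0 \<longrightarrow> Med2 p h = 1/4)
    \<and> (p = 2 \<longrightarrow> multiplicity 2 h \<ge> 1 \<longrightarrow>
          Med2 p h = (2 ^ (multiplicity 2 h + 1) - 3) / 2 ^ (multiplicity 2 h + 2))"
proof -
  have p2: "p \<ge> 2" using prime_ge_2_nat[OF assms(1)] .
  have "\<exists>L. med_ratio p h \<longlonglongrightarrow> L \<and> (p mod 4 = 1 \<longrightarrow> L = 1)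
      \<and> (p mod 4 = 3 \<longrightarrow> L = (1 - real p powi (- (int (multiplicity (int p) h) + 1))) / (1 + 1 / real p))
      \<and> (p = 2 \<longrightarrow> L = D2 (multiplicity 2 h))"
  proof -
    consider "p = 2" | "p mod 4 = 1" | "p mod 4 = 3"
    proof (cases "p = 2")
      case False
      then have "odd p" using assms(1) prime_odd_nat p2 by auto
      then have "p mod 4 = 1 \<or> p mod 4 = 3" by presburger
      then show ?thesis using that by blast
    qed (use that in blast)
    then show ?thesis
    proof cases
      case 1
      have "med_ratio p h \<longlonglongrightarrow> D2 (multiplicity 2 h)" using two_lim assms(2) unfolding 1 by blast
      then show ?thesis using 1 by auto
    next
      case 2
      have "med_ratio p h k = 1" for k
        unfolding med_ratio_FF[OF assms(1)] p1_F[OF assms(1) 2] using p2 by simp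
      then have "med_ratio p h = (\<lambda>k. 1)" by (rule ext)
      then have "med_ratio p h \<longlonglongrightarrow> 1" by simp
      then show ?thesis using 2 by auto
    next
      case 3
      define m where "m = multiplicity (int p) h"
      have l: "med_ratio p h \<longlonglongrightarrow> D3 (1 / real p) m" using p3_lim[OF assms(1) 3] assms(2) unfolding m_def by blast
      have e: "-(int m + 1) = - int (m+1)" by simp
      have "D3 (1 / real p) m = (1 - real p powi (- (int m + 1))) / (1 + 1 / real p)"
        unfolding D3_def by (simp only: e power_int_minus power_int_of_nat) (simp add: power_one_over inverse_eq_divide)
      then show ?thesis using l 3 unfolding m_def by auto
    qed
  qed
  then obtain L where L: "med_ratio p h \<longlonglongrightarrow> L" "p mod 4 = 1 \<longrightarrow> L = 1"
      "p mod 4 = 3 \<longrightarrow> L = (1 - real p powi (- (int (multiplicity (int p) h) + 1))) / (1 + 1 / real p)"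
      "p = 2 \<longrightarrow> L = D2 (multiplicity 2 h)" by blast
  have M: "Med2 p h = L" unfolding Med2_def using L(1) by (rule limI)
  show ?thesis using L M convergentI[OF L(1)] unfolding D2_def by auto
qed


end
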